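(* Suppose that $\Omega$ is a finite signature containing at least one symbol of arity $n\ge 2$, and let $X$ be a finite nonempty set. Then the Polish representation $\Phi_X:\overline{\Omega}_X\mathsf{Fin}_\Omega\to S_{\mathsf M}$ is not injective.
   Context: $\Omega=\biguplus_n\Omega_n$ has finitely many symbols in total (discrete topology), and $X$ is discrete. $\mathsf{Fin}_\Omega$ is the class of all finite (discrete) $\Omega$-algebras, and $\overline{\Omega}_X\mathsf{Fin}_\Omega$ is the free profinite $\Omega$-algebra on $X$ (the profinite $\Omega$-algebra with a map $X\to\overline{\Omega}_X\mathsf{Fin}_\Omega$ whose image generates a dense subalgebra, such that every map from $X$ into a finite $\Omega$-algebra extends uniquely to a continuous homomorphism). Let $\overline{\Omega}_{X\cup\Omega}\mathsf M$ be the free profinite monoid on the finite set $X\cup\Omega$ (disjoint union of $X$ and all $\Omega_k$). Make it an $\Omega$-algebra by $E_k(w,u_1,\dots,u_k)=wu_1\cdots u_k$ for $w\in\Omega_k$ (product in the monoid); $S_{\mathsf M}$ is the closed $\Omega$-subalgebra generated by $X$. The Polish representation $\Phi_X$ is the unique continuous $\Omega$-homomorphism $\overline{\Omega}_X\mathsf{Fin}_\Omega\to S_{\mathsf M}$ with $\Phi_X(x)=x$ for all $x\in X$. *)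

theory Defs
  imports "HOL-Analysis.Analysis"
begin

text \<open>A signature is a type 'o of symbols with an arity function ar.\<close>

definition op_closed :: "('o \<Rightarrow> nat) \<Rightarrow> 'a set \<Rightarrow> ('o \<Rightarrow> (nat \<Rightarrow> 'a) \<Rightarrow> 'a) \<Rightarrow> bool" where
  "op_closed ar A f \<longleftrightarrow> (\<forall>w. \<forall>u \<in> PiE {..<ar w} (\<lambda>_. A). f w u \<in> A)"

definition alg_hom :: "('o \<Rightarrow> nat) \<Rightarrow> 'a set \<Rightarrow> ('o \<Rightarrow> (nat \<Rightarrow> 'a) \<Rightarrow> 'a)
    \<Rightarrow> 'b set \<Rightarrow> ('o \<Rightarrow> (nat \<Rightarrow> 'b) \<Rightarrow> 'b) \<Rightarrow> ('a \<Rightarrow> 'b) \<Rightarrow> bool" where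
  "alg_hom ar A f B g h \<longleftrightarrow> (\<forall>a\<in>A. h a \<in> B) \<and>
     (\<forall>w. \<forall>u \<in> PiE {..<ar w} (\<lambda>_. A). h (f w u) = g w (\<lambda>i\<in>{..<ar w}. h (u i)))"

text \<open>Finite (discrete) Omega-algebras; as test objects we use algebras whose
  carrier is a finite set of naturals (every finite algebra is isomorphic to one).\<close>
definition finite_alg :: "('o \<Rightarrow> nat) \<Rightarrow> nat set \<Rightarrow> ('o \<Rightarrow> (nat \<Rightarrow> nat) \<Rightarrow> nat) \<Rightarrow> bool" where
  "finite_alg ar B g \<longleftrightarrow> finite B \<and> op_closed ar B g"

definition top_alg :: "('o \<Rightarrow> nat) \<Rightarrow> 'a set \<Rightarrow> ('o \<Rightarrow> (nat \<Rightarrow> 'a) \<Rightarrow> 'a) \<Rightarrow> 'a topology \<Rightarrow> bool" where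
  "top_alg ar A f T \<longleftrightarrow> topspace T = A \<and> op_closed ar A f \<and>
     (\<forall>w. continuous_map (product_topology (\<lambda>_. T) {..<ar w}) T (f w))"

text \<open>Profinite = compact Hausdorff topological algebra that is residually finite
  (points separated by continuous homomorphisms into finite discrete algebras);
  equivalently, an inverse limit of finite algebras.\<close>
definition profinite_alg :: "('o \<Rightarrow> nat) \<Rightarrow> 'a set \<Rightarrow> ('o \<Rightarrow> (nat \<Rightarrow> 'a) \<Rightarrow> 'a) \<Rightarrow> 'a topology \<Rightarrow> bool" where
  "profinite_alg ar A f T \<longleftrightarrow> top_alg ar A f T \<and> compact_space T \<and> Hausdorff_space T \<and>
     (\<forall>x\<in>A. \<forall>y\<in>A. x \<noteq> y \<longrightarrow>
        (\<exists>(B::nat set) g h. finite_alg ar B g \<and> alg_hom ar A f B g h \<and>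
            continuous_map T (discrete_topology B) h \<and> h x \<noteq> h y))"

definition subalg_gen :: "('o \<Rightarrow> nat) \<Rightarrow> 'a set \<Rightarrow> ('o \<Rightarrow> (nat \<Rightarrow> 'a) \<Rightarrow> 'a) \<Rightarrow> 'a set \<Rightarrow> 'a set" where
  "subalg_gen ar A f G = \<Inter> {S. G \<subseteq> S \<and> S \<subseteq> A \<and> op_closed ar S f}"

definition closed_subalg_gen :: "('o \<Rightarrow> nat) \<Rightarrow> 'a set \<Rightarrow> ('o \<Rightarrow> (nat \<Rightarrow> 'a) \<Rightarrow> 'a)
    \<Rightarrow> 'a topology \<Rightarrow> 'a set \<Rightarrow> 'a set" where
  "closed_subalg_gen ar A f T G = \<Inter> {S. G \<subseteq> S \<and> S \<subseteq> A \<and> op_closed ar S f \<and> closedin T S}"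

definition free_profinite_alg :: "('o \<Rightarrow> nat) \<Rightarrow> 'a set \<Rightarrow> ('o \<Rightarrow> (nat \<Rightarrow> 'a) \<Rightarrow> 'a)
    \<Rightarrow> 'a topology \<Rightarrow> ('x \<Rightarrow> 'a) \<Rightarrow> bool" where
  "free_profinite_alg ar A f T \<iota> \<longleftrightarrow> profinite_alg ar A f T \<and> range \<iota> \<subseteq> A \<and>
     T closure_of (subalg_gen ar A f (range \<iota>)) = A \<and>
     (\<forall>(B::nat set) g (k::'x \<Rightarrow> nat). finite_alg ar B g \<and> range k \<subseteq> B \<longrightarrow>
        (\<exists>h. alg_hom ar A f B g h \<and> continuous_map T (discrete_topology B) h \<and> h \<circ> \<iota> = k \<and>
           (\<forall>h'. alg_hom ar A f B g h' \<and> continuous_map T (discrete_topology B) h' \<and> h' \<circ> \<iota> = k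
                 \<longrightarrow> (\<forall>a\<in>A. h' a = h a))))"

definition monoid_on :: "'m set \<Rightarrow> ('m \<Rightarrow> 'm \<Rightarrow> 'm) \<Rightarrow> 'm \<Rightarrow> bool" where
  "monoid_on M m e \<longleftrightarrow> e \<in> M \<and> (\<forall>a\<in>M. \<forall>b\<in>M. m a b \<in> M) \<and>
     (\<forall>a\<in>M. \<forall>b\<in>M. \<forall>c\<in>M. m (m a b) c = m a (m b c)) \<and>
     (\<forall>a\<in>M. m e a = a \<and> m a e = a)"

definition mon_hom :: "'m set \<Rightarrow> ('m \<Rightarrow> 'm \<Rightarrow> 'm) \<Rightarrow> 'm \<Rightarrow> 'n set \<Rightarrow> ('n \<Rightarrow> 'n \<Rightarrow> 'n) \<Rightarrow> 'n
    \<Rightarrow> ('m \<Rightarrow> 'n) \<Rightarrow> bool" where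
  "mon_hom M m e N n d h \<longleftrightarrow> (\<forall>a\<in>M. h a \<in> N) \<and> h e = d \<and>
     (\<forall>a\<in>M. \<forall>b\<in>M. h (m a b) = n (h a) (h b))"

definition finite_monoid :: "nat set \<Rightarrow> (nat \<Rightarrow> nat \<Rightarrow> nat) \<Rightarrow> nat \<Rightarrow> bool" where
  "finite_monoid N n d \<longleftrightarrow> finite N \<and> monoid_on N n d"

definition top_monoid :: "'m set \<Rightarrow> ('m \<Rightarrow> 'm \<Rightarrow> 'm) \<Rightarrow> 'm \<Rightarrow> 'm topology \<Rightarrow> bool" where
  "top_monoid M m e T \<longleftrightarrow> topspace T = M \<and> monoid_on M m e \<and>
     continuous_map (prod_topology T T) T (\<lambda>(a, b). m a b)"

definition profinite_monoid :: "'m set \<Rightarrow> ('m \<Rightarrow> 'm \<Rightarrow> 'm) \<Rightarrow> 'm \<Rightarrow> 'm topology \<Rightarrow> bool" where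
  "profinite_monoid M m e T \<longleftrightarrow> top_monoid M m e T \<and> compact_space T \<and> Hausdorff_space T \<and>
     (\<forall>x\<in>M. \<forall>y\<in>M. x \<noteq> y \<longrightarrow>
        (\<exists>(N::nat set) n d h. finite_monoid N n d \<and> mon_hom M m e N n d h \<and>
            continuous_map T (discrete_topology N) h \<and> h x \<noteq> h y))"

definition submonoid_gen :: "'m set \<Rightarrow> ('m \<Rightarrow> 'm \<Rightarrow> 'm) \<Rightarrow> 'm \<Rightarrow> 'm set \<Rightarrow> 'm set" where
  "submonoid_gen M m e G = \<Inter> {S. G \<subseteq> S \<and> S \<subseteq> M \<and> e \<in> S \<and> (\<forall>a\<in>S. \<forall>b\<in>S. m a b \<in> S)}"

definition free_profinite_monoid :: "'m set \<Rightarrow> ('m \<Rightarrow> 'm \<Rightarrow> 'm) \<Rightarrow> 'm \<Rightarrow> 'm topology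
    \<Rightarrow> ('g \<Rightarrow> 'm) \<Rightarrow> bool" where
  "free_profinite_monoid M m e T j \<longleftrightarrow> profinite_monoid M m e T \<and> range j \<subseteq> M \<and>
     T closure_of (submonoid_gen M m e (range j)) = M \<and>
     (\<forall>(N::nat set) n d (k::'g \<Rightarrow> nat). finite_monoid N n d \<and> range k \<subseteq> N \<longrightarrow>
        (\<exists>h. mon_hom M m e N n d h \<and> continuous_map T (discrete_topology N) h \<and> h \<circ> j = k \<and>
           (\<forall>h'. mon_hom M m e N n d h' \<and> continuous_map T (discrete_topology N) h' \<and> h' \<circ> j = k
                 \<longrightarrow> (\<forall>a\<in>M. h' a = h a))))"

definition polish_op :: "('o \<Rightarrow> nat) \<Rightarrow> ('m \<Rightarrow> 'm \<Rightarrow> 'm) \<Rightarrow> ('x + 'o \<Rightarrow> 'm)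
    \<Rightarrow> 'o \<Rightarrow> (nat \<Rightarrow> 'm) \<Rightarrow> 'm" where
  "polish_op ar m j w u = foldl m (j (Inr w)) (map u [0..<ar w])"

definition polish_S :: "('o \<Rightarrow> nat) \<Rightarrow> 'm set \<Rightarrow> ('m \<Rightarrow> 'm \<Rightarrow> 'm) \<Rightarrow> 'm topology
    \<Rightarrow> ('x + 'o \<Rightarrow> 'm) \<Rightarrow> 'm set" where
  "polish_S ar M m T j = closed_subalg_gen ar M (polish_op ar m j) T (j ` range Inl)"

end

theory Submission
  imports Defs
begin
primrec mp :: "('a \<Rightarrow> 'a \<Rightarrow> 'a) \<Rightarrow> 'a \<Rightarrow> 'a \<Rightarrow> nat \<Rightarrow> 'a" where
  "mp n d a 0 = d" | "mp n d a (Suc i) = n a (mp n d a i)"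

lemma mp_in: "monoid_on N n d \<Longrightarrow> a \<in> N \<Longrightarrow> mp n d a i \<in> N"
  by (induction i) (auto simp: monoid_on_def)

lemma mp_add: "monoid_on N n d \<Longrightarrow> a \<in> N \<Longrightarrow> mp n d a (i + j) = n (mp n d a i) (mp n d a j)"
proof (induction i)
  case 0 then show ?case using mp_in[of N n d a j] by (simp add: monoid_on_def)
next
  case (Suc i) then show ?case using mp_in[of N n d a] by (simp add: monoid_on_def)
qed

lemma mp_one: "monoid_on N n d \<Longrightarrow> a \<in> N \<Longrightarrow> mp n d a 1 = a"
  by (simp add: monoid_on_def)

lemma mp_pigeon:
  assumes "monoid_on N n d" "finite N" "a \<in> N"
  shows "\<exists>i j. i < j \<and> j \<le> card N \<and> mp n d a i = mp n d a j"
proof (rule ccontr)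
  assume H: "\<not> ?thesis"
  have "inj_on (mp n d a) {0..card N}"
  proof (rule inj_onI)
    fix i j assume "i \<in> {0..card N}" "j \<in> {0..card N}" "mp n d a i = mp n d a j"
    then show "i = j" using H by (metis atLeastAtMost_iff linorder_neqE_nat)
  qed
  moreover have "mp n d a ` {0..card N} \<subseteq> N" using mp_in[OF assms(1,3)] by auto
  ultimately have "card {0..card N} \<le> card N" using card_inj_on_le assms(2) by blast
  then show False by simp
qed

lemma mp_period:
  assumes "monoid_on N n d" "a \<in> N" "mp n d a i = mp n d a j" "i \<le> j" "i \<le> t"
  shows "mp n d a (t + q * (j - i)) = mp n d a t"
proof (induction q)
  case 0 then show ?case by simp
next
  case (Suc q)
  obtain s where s: "t = s + i" using assms(5) le_Suc_ex add.commute by blast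
  obtain p where p: "j = i + p" using assms(4) le_Suc_ex by blast
  have jp: "j - i = p" using p by simp
  have e1: "t + Suc q * (j - i) = s + (j + q * p)" using s p jp by simp
  have e2: "mp n d a (j + q * p) = mp n d a (i + q * p)"
    using mp_add[OF assms(1,2), of j "q * p"] mp_add[OF assms(1,2), of i "q * p"] assms(3) by simp
  have "mp n d a (t + Suc q * (j - i)) = n (mp n d a s) (mp n d a (j + q * p))"
    unfolding e1 by (rule mp_add[OF assms(1,2)])
  also have "\<dots> = n (mp n d a s) (mp n d a (i + q * p))" unfolding e2 ..
  also have "\<dots> = mp n d a (s + (i + q * p))" by (rule mp_add[OF assms(1,2), symmetric])
  also have "s + (i + q * p) = t + q * (j - i)" using s jp by simp
  finally show ?case using Suc by simp
qed

lemma mp_idem: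
  assumes "monoid_on N n d" "finite N" "a \<in> N" "card N \<le> m"
  shows "mp n d a (fact m + fact m) = mp n d a (fact m)"
proof -
  obtain i j where ij: "i < j" "j \<le> card N" "mp n d a i = mp n d a j"
    using mp_pigeon[OF assms(1,2,3)] by blast
  have "j - i dvd (fact m :: nat)" using ij assms(4) by (intro dvd_fact) auto
  then obtain q where q0: "(fact m :: nat) = (j - i) * q" unfolding dvd_def by blast
  have q: "(fact m :: nat) = q * (j - i)" using q0 by (simp add: mult.commute)
  have ifm: "i \<le> fact m" using ij assms(4) fact_ge_self[of m] by linarith
  have "mp n d a (fact m + q * (j - i)) = mp n d a (fact m)"
    using mp_period[OF assms(1,3) ij(3) _ ifm, of q] ij(1) by simp
  then show ?thesis unfolding q[symmetric] .
qed

lemma mp_mult: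
  assumes "monoid_on N n d" "a \<in> N" "mp n d a (M + M) = mp n d a M" "q \<ge> 1"
  shows "mp n d a (q * M) = mp n d a M"
  using assms(4)
proof (induction q)
  case 0 then show ?case by simp
next
  case (Suc q)
  show ?case
  proof (cases "q = 0")
    case True then show ?thesis by simp
  next
    case False
    then have "mp n d a (Suc q * M) = n (mp n d a M) (mp n d a (q * M))"
      using mp_add[OF assms(1,2), of M "q*M"] by simp
    also have "\<dots> = n (mp n d a M) (mp n d a M)" using Suc False by simp
    also have "\<dots> = mp n d a M" using mp_add[OF assms(1,2), of M M] assms(3) by simp
    finally show ?thesis .
  qed
qed

lemma foldl_closed_N:
  assumes "monoid_on N n d" "a \<in> N" "set xs \<subseteq> N"
  shows "foldl n a xs \<in> N"
  using assms(2,3)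
proof (induction xs arbitrary: a)
  case Nil then show ?case by simp
next
  case (Cons y ys)
  have "n a y \<in> N" using Cons.prems assms(1) by (simp add: monoid_on_def)
  then show ?case using Cons.IH Cons.prems by simp
qed

lemma foldl_mon:
  assumes "monoid_on N n d" "a \<in> N" "set xs \<subseteq> N"
  shows "foldl n a xs = n a (foldl n d xs)"
  using assms(2,3)
proof (induction xs arbitrary: a)
  case Nil then show ?case using assms(1) by (simp add: monoid_on_def)
next
  case (Cons y ys)
  have yN: "y \<in> N" and ysN: "set ys \<subseteq> N" using Cons.prems by auto
  have ayN: "n a y \<in> N" using Cons.prems yN assms(1) by (simp add: monoid_on_def)
  have fin: "foldl n d ys \<in> N" using foldl_closed_N[OF assms(1) _ ysN] assms(1) by (simp add: monoid_on_def)
  have "foldl n a (y # ys) = foldl n (n a y) ys" by simp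
  also have "\<dots> = n (n a y) (foldl n d ys)" using Cons.IH[OF ayN ysN] .
  finally have L: "foldl n a (y # ys) = n (n a y) (foldl n d ys)" .
  have "foldl n d (y # ys) = foldl n y ys" using assms(1) yN by (simp add: monoid_on_def)
  also have "\<dots> = n y (foldl n d ys)" using Cons.IH[OF yN ysN] .
  finally have R: "foldl n d (y # ys) = n y (foldl n d ys)" .
  show ?case unfolding L R using assms(1) Cons.prems yN fin by (simp add: monoid_on_def)
qed

lemma foldl_rep:
  assumes "monoid_on N n d" "x \<in> N"
  shows "foldl n d (replicate r x) = mp n d x r"
proof (induction r)
  case 0 then show ?case by simp
next
  case (Suc r)
  have "foldl n d (replicate (Suc r) x) = foldl n x (replicate r x)"
    using assms by (simp add: monoid_on_def)
  also have "\<dots> = n x (foldl n d (replicate r x))"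
  proof -
    have "set (replicate r x) \<subseteq> N" using assms(2) by (cases r) auto
    then show ?thesis using foldl_mon[OF assms(1) assms(2), of "replicate r x"] by blast
  qed
  finally show ?case using Suc by simp
qed

lemma key:
  assumes mon: "monoid_on N n d" and cN: "c \<in> N" and xN: "x \<in> N"
    and ic: "mp n d c (M + M) = mp n d c M" and ix: "mp n d x (M + M) = mp n d x M"
    and K: "K \<ge> 1"
    and Pn: "\<And>t. Pn t = n (n c t) (mp n d x K)"
  shows "(Pn ^^ M) (n (n (n c ((Pn ^^ M) x)) ((Pn ^^ M) x)) (mp n d x (K - 1)))
       = n (n (n c ((Pn ^^ M) x)) ((Pn ^^ M) x)) (mp n d x (K - 1))"
proof -
  have A: "\<And>a b e. a \<in> N \<Longrightarrow> b \<in> N \<Longrightarrow> e \<in> N \<Longrightarrow> n (n a b) e = n a (n b e)"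
    using mon by (simp add: monoid_on_def)
  have cl: "\<And>a b. a \<in> N \<Longrightarrow> b \<in> N \<Longrightarrow> n a b \<in> N"
    using mon by (simp add: monoid_on_def)
  have mi: "\<And>a i. a \<in> N \<Longrightarrow> mp n d a i \<in> N" using mp_in[OF mon] by blast
  have m1: "\<And>a i j. a \<in> N \<Longrightarrow> n (mp n d a i) (mp n d a j) = mp n d a (i + j)"
    using mp_add[OF mon] by metis
  have m2: "\<And>a i j r. a \<in> N \<Longrightarrow> r \<in> N \<Longrightarrow> n (mp n d a i) (n (mp n d a j) r) = n (mp n d a (i + j)) r"
  proof -
    fix a i j r assume "a \<in> N" "r \<in> N"
    then show "n (mp n d a i) (n (mp n d a j) r) = n (mp n d a (i + j)) r"
      using A[of "mp n d a i" "mp n d a j" r] mi m1 by (simp del: mp.simps)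
  qed
  have m1': "\<And>a j. a \<in> N \<Longrightarrow> n a (mp n d a j) = mp n d a (1 + j)"
    using m1 mp_one[OF mon] by metis
  have m2': "\<And>a j r. a \<in> N \<Longrightarrow> r \<in> N \<Longrightarrow> n a (n (mp n d a j) r) = n (mp n d a (1 + j)) r"
    using m2 mp_one[OF mon] by metis
  have pow: "(Pn ^^ r) t = n (mp n d c r) (n t (mp n d x (K * r)))" if "t \<in> N" for r t
  proof (induction r)
    case 0 then show ?case using mon that mi xN by (simp add: monoid_on_def)
  next
    case (Suc r)
    have "(Pn ^^ Suc r) t = n (n c (n (mp n d c r) (n t (mp n d x (K * r))))) (mp n d x K)"
    proof -
      have "(Pn ^^ Suc r) t = Pn ((Pn ^^ r) t)" by simp
      then show ?thesis unfolding Suc.IH by (simp only: Pn)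
    qed
    also have "\<dots> = n (n c (mp n d c r)) (n t (n (mp n d x (K * r)) (mp n d x K)))"
      using A cl mi that cN xN by (simp del: mp.simps)
    also have "\<dots> = n (mp n d c (1 + r)) (n t (mp n d x (K * r + K)))"
      using m1[OF xN] m1'[OF cN] by (simp del: mp.simps)
    finally show ?case by (simp add: algebra_simps del: mp.simps)
  qed
  define a where "a = n (mp n d c M) (mp n d x (1 + K * M))"
  have aN: "a \<in> N" using a_def cl mi cN xN by (simp del: mp.simps)
  have al: "(Pn ^^ M) x = a"
  proof -
    have "(Pn ^^ M) x = n (mp n d c M) (n x (mp n d x (K * M)))" using pow[OF xN] .
    also have "n x (mp n d x (K * M)) = mp n d x (1 + K * M)" using m1'[OF xN] .
    finally show ?thesis unfolding a_def .
  qed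
  define L where "L = K - 1"
  define T where "T = n (mp n d x (1 + K * M)) (n (mp n d c M) (mp n d x (1 + K * M + L)))"
  have TN: "T \<in> N" unfolding T_def using cl mi cN xN by (simp del: mp.simps)
  have R: "n (n (n c a) a) (mp n d x L) = n (mp n d c (1 + M)) T"
  proof -
    have "n (n (n c a) a) (mp n d x L) = n c (n (mp n d c M) (n (mp n d x (1 + K * M)) (n (mp n d c M) (n (mp n d x (1 + K * M)) (mp n d x L)))))"
      using a_def A cl mi cN xN aN by (simp del: mp.simps)
    also have "n (mp n d x (1 + K * M)) (mp n d x L) = mp n d x (1 + K * M + L)"
      using m1[OF xN] .
    also have "n c (n (mp n d c M) (n (mp n d x (1 + K * M)) (n (mp n d c M) (mp n d x (1 + K * M + L)))))
        = n (mp n d c (1 + M)) T"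
      unfolding T_def using m2'[OF cN] cl mi cN xN by (simp del: mp.simps)
    finally show ?thesis .
  qed
  have eqc: "mp n d c (M + (1 + M)) = mp n d c (1 + M)"
  proof -
    have "mp n d c (M + (1 + M)) = n (mp n d c 1) (mp n d c (M + M))"
      using mp_add[OF mon cN, of 1 "M+M"] by (simp add: algebra_simps del: mp.simps)
    then show ?thesis using ic mp_add[OF mon cN, of 1 M] by (simp del: mp.simps)
  qed
  have eqx: "mp n d x (1 + K * M + L + K * M) = mp n d x (1 + K * M + L)"
  proof -
    have "mp n d x (1 + K * M + L + K * M) = n (mp n d x (1 + L)) (mp n d x ((K + K) * M))"
      using mp_add[OF mon xN, of "1 + L" "(K+K)*M"] by (simp add: algebra_simps del: mp.simps)
    also have "mp n d x ((K + K) * M) = mp n d x (K * M)"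
      using mp_mult[OF mon xN ix, of "K+K"] mp_mult[OF mon xN ix, of K] K by (simp del: mp.simps)
    also have "n (mp n d x (1 + L)) (mp n d x (K * M)) = mp n d x (1 + K * M + L)"
      using mp_add[OF mon xN, of "1 + L" "K*M"] by (simp add: algebra_simps del: mp.simps)
    finally show ?thesis .
  qed
  have "(Pn ^^ M) (n (mp n d c (1 + M)) T) = n (mp n d c M) (n (n (mp n d c (1 + M)) T) (mp n d x (K * M)))"
    using pow cl mi cN xN TN by (simp del: mp.simps)
  also have "\<dots> = n (mp n d c M) (n (mp n d c (1 + M)) (n (mp n d x (1 + K * M)) (n (mp n d c M) (n (mp n d x (1 + K * M + L)) (mp n d x (K * M))))))"
    unfolding T_def using A cl mi cN xN by (simp del: mp.simps)
  also have "n (mp n d x (1 + K * M + L)) (mp n d x (K * M)) = mp n d x (1 + K * M + L + K * M)"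
    using m1[OF xN] .
  also have "\<dots> = mp n d x (1 + K * M + L)" using eqx .
  also have "n (mp n d c M) (n (mp n d c (1 + M)) (n (mp n d x (1 + K * M)) (n (mp n d c M) (mp n d x (1 + K * M + L)))))
      = n (mp n d c (M + (1 + M))) T"
    unfolding T_def[symmetric] by (rule m2[OF cN TN])
  also have "\<dots> = n (mp n d c (1 + M)) T" using eqc by (simp del: mp.simps)
  finally have "(Pn ^^ M) (n (mp n d c (1 + M)) T) = n (mp n d c (1 + M)) T" .
  then show ?thesis unfolding al L_def[symmetric] R .
qed

lemma hom_foldl:
  assumes "mon_hom M m e N n d \<kappa>" "monoid_on M m e" "a \<in> M" "set xs \<subseteq> M"
  shows "\<kappa> (foldl m a xs) = foldl n (\<kappa> a) (map \<kappa> xs)"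
  using assms(3,4)
proof (induction xs arbitrary: a)
  case Nil then show ?case by simp
next
  case (Cons y ys)
  have "m a y \<in> M" using Cons.prems assms(2) by (simp add: monoid_on_def)
  then have "\<kappa> (foldl m (m a y) ys) = foldl n (\<kappa> (m a y)) (map \<kappa> ys)"
    using Cons by simp
  moreover have "\<kappa> (m a y) = n (\<kappa> a) (\<kappa> y)" using Cons.prems assms(1) by (simp add: mon_hom_def)
  ultimately show ?case by simp
qed

lemma foldl_closed:
  assumes "monoid_on M m e" "a \<in> M" "set xs \<subseteq> M"
  shows "foldl m a xs \<in> M"
  using assms(2,3)
proof (induction xs arbitrary: a)
  case Nil then show ?case by simp
next
  case (Cons y ys) then show ?case using assms(1) by (simp add: monoid_on_def)
qed

theorem proposition4p14:
  fixes ar :: "'o::finite \<Rightarrow> nat"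
    and F :: "'f set" and opF :: "'o \<Rightarrow> (nat \<Rightarrow> 'f) \<Rightarrow> 'f" and TF :: "'f topology"
    and \<iota> :: "'x::finite \<Rightarrow> 'f"
    and M :: "'m set" and m :: "'m \<Rightarrow> 'm \<Rightarrow> 'm" and e :: 'm and TM :: "'m topology"
    and j :: "'x + 'o \<Rightarrow> 'm"
    and \<Phi> :: "'f \<Rightarrow> 'm"
  assumes "\<exists>w. ar w \<ge> 2"
    and "free_profinite_alg ar F opF TF \<iota>"
    and "free_profinite_monoid M m e TM j"
    and "alg_hom ar F opF (polish_S ar M m TM j) (polish_op ar m j) \<Phi>"
    and "continuous_map TF (subtopology TM (polish_S ar M m TM j)) \<Phi>"
    and "\<forall>x. \<Phi> (\<iota> x) = j (Inl x)"
  shows "\<not> inj_on \<Phi> F"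
proof -
  obtain w where kw: "ar w \<ge> 2" using assms(1) by blast
  define k where "k = ar w"
  have k2: "k \<ge> 2" using kw k_def by simp
  define S where "S = polish_S ar M m TM j"
  have palg: "profinite_alg ar F opF TF" and rngF: "range \<iota> \<subseteq> F"
    and univ: "\<And>(B::nat set) g (k::'x \<Rightarrow> nat). finite_alg ar B g \<Longrightarrow> range k \<subseteq> B \<Longrightarrow>
        (\<exists>h. alg_hom ar F opF B g h \<and> continuous_map TF (discrete_topology B) h \<and> h \<circ> \<iota> = k \<and>
           (\<forall>h'. alg_hom ar F opF B g h' \<and> continuous_map TF (discrete_topology B) h' \<and> h' \<circ> \<iota> = k
                 \<longrightarrow> (\<forall>a\<in>F. h' a = h a)))"
    using assms(2) unfolding free_profinite_alg_def by blast+
  have topF: "topspace TF = F" and opclF: "op_closed ar F opF" and cptF: "compact_space TF"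
    using palg unfolding profinite_alg_def top_alg_def by blast+
  have pmon: "profinite_monoid M m e TM" and rngM: "range j \<subseteq> M"
    using assms(3) unfolding free_profinite_monoid_def by blast+
  have topM: "topspace TM = M" and monM: "monoid_on M m e"
    using pmon unfolding profinite_monoid_def top_monoid_def by blast+
  have sepM: "\<And>x y. x \<in> M \<Longrightarrow> y \<in> M \<Longrightarrow> x \<noteq> y \<Longrightarrow>
        (\<exists>(N::nat set) n d h. finite_monoid N n d \<and> mon_hom M m e N n d h \<and>
            continuous_map TM (discrete_topology N) h \<and> h x \<noteq> h y)"
    using pmon unfolding profinite_monoid_def by blast
  have SM: "S \<subseteq> M"
  proof -
    have "op_closed ar M (polish_op ar m j)"
      unfolding op_closed_def polish_op_def
    proof (intro allI ballI)
      fix w' u assume u: "u \<in> PiE {..<ar w'} (\<lambda>_. M)"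
      show "foldl m (j (Inr w')) (map u [0..<ar w']) \<in> M"
        using u rngM by (intro foldl_closed[OF monM]) (auto simp: PiE_iff)
    qed
    moreover have "j ` range Inl \<subseteq> M" using rngM by auto
    moreover have "closedin TM M" using topM closedin_topspace by metis
    ultimately have "M \<in> {S. j ` range Inl \<subseteq> S \<and> S \<subseteq> M \<and> op_closed ar S (polish_op ar m j) \<and> closedin TM S}"
      by blast
    then show ?thesis unfolding S_def polish_S_def closed_subalg_gen_def by blast
  qed
  have hom\<Phi>: "alg_hom ar F opF S (polish_op ar m j) \<Phi>" using assms(4) S_def by simp
  have \<Phi>M: "\<And>z. z \<in> F \<Longrightarrow> \<Phi> z \<in> M" using hom\<Phi> SM unfolding alg_hom_def by blast
  have \<Phi>op: "\<And>u. u \<in> PiE {..<k} (\<lambda>_. F) \<Longrightarrow>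
      \<Phi> (opF w u) = foldl m (j (Inr w)) (map (\<lambda>i. \<Phi> (u i)) [0..<k])"
  proof -
    fix u assume u: "u \<in> PiE {..<k} (\<lambda>_. F)"
    then have "\<Phi> (opF w u) = polish_op ar m j w (\<lambda>i\<in>{..<ar w}. \<Phi> (u i))"
      using hom\<Phi> k_def unfolding alg_hom_def by blast
    also have "\<dots> = foldl m (j (Inr w)) (map (\<lambda>i. \<Phi> (u i)) [0..<k])"
      unfolding polish_op_def k_def by (intro arg_cong[where f="foldl m (j (Inr w))"] map_cong) auto
    finally show "\<Phi> (opF w u) = foldl m (j (Inr w)) (map (\<lambda>i. \<Phi> (u i)) [0..<k])" .
  qed
  obtain x0 :: 'x where True by blast
  define xF where "xF = \<iota> x0"
  have xFF: "xF \<in> F" using rngF xF_def by auto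
  define P where "P y = opF w (\<lambda>i\<in>{..<k}. if i = 0 then y else xF)" for y
  define V where "V y z = opF w (\<lambda>i\<in>{..<k}. if i = 0 then y else if i = 1 then z else xF)" for y z
  have PF: "\<And>y. y \<in> F \<Longrightarrow> P y \<in> F"
    using opclF xFF unfolding P_def op_closed_def k_def by (auto simp: restrict_PiE_iff)
  have VF: "\<And>y z. y \<in> F \<Longrightarrow> z \<in> F \<Longrightarrow> V y z \<in> F"
    using opclF xFF unfolding V_def op_closed_def k_def by (auto simp: restrict_PiE_iff)
  have PrF: "\<And>r y. y \<in> F \<Longrightarrow> (P ^^ r) y \<in> F"
  proof -
    fix r :: nat and y assume "y \<in> F" then show "(P ^^ r) y \<in> F" by (induction r) (auto intro: PF)
  qed
  define aS where "aS r = V ((P ^^ r) xF) ((P ^^ r) xF)" for r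
  define bS where "bS r = (P ^^ r) (aS r)" for r
  have aF: "\<And>r. aS r \<in> F" unfolding aS_def using VF PrF xFF by blast
  have bF: "\<And>r. bS r \<in> F" unfolding bS_def using PrF aF by blast
  define B :: "nat set" where "B = {0, 1, 2}"
  define g :: "'o \<Rightarrow> (nat \<Rightarrow> nat) \<Rightarrow> nat" where
    "g w' u = (if w' = w then (if u 1 = 0 then 1 else if u 0 = 1 \<and> u 1 = 1 then 2 else 0) else 0)" for w' u
  have fa: "finite_alg ar B g" unfolding finite_alg_def op_closed_def B_def g_def by auto
  obtain h where hhom: "alg_hom ar F opF B g h" and hcont: "continuous_map TF (discrete_topology B) h"
    and hgen: "h \<circ> \<iota> = (\<lambda>_. 0)"
    using univ[OF fa, of "\<lambda>_. 0"] B_def by auto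
  have hx: "h xF = 0" using hgen xF_def by (metis comp_apply)
  have hop: "\<And>u. u \<in> PiE {..<k} (\<lambda>_. F) \<Longrightarrow> h (opF w u) = g w (\<lambda>i\<in>{..<k}. h (u i))"
    using hhom k_def unfolding alg_hom_def by blast
  have hP: "\<And>y. y \<in> F \<Longrightarrow> h (P y) = 1"
  proof -
    fix y assume y: "y \<in> F"
    have "h (P y) = g w (\<lambda>i\<in>{..<k}. h ((\<lambda>i\<in>{..<k}. if i = 0 then y else xF) i))"
      unfolding P_def using hop y xFF by (auto simp: restrict_PiE_iff)
    then show "h (P y) = 1" using k2 hx unfolding g_def by simp
  qed
  have hPr: "\<And>r y. y \<in> F \<Longrightarrow> r \<ge> 1 \<Longrightarrow> h ((P ^^ r) y) = 1"
  proof -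
    fix r :: nat and y assume "y \<in> F" "r \<ge> 1"
    then obtain r' where "r = Suc r'" by (cases r) auto
    then show "h ((P ^^ r) y) = 1" using hP PrF \<open>y \<in> F\<close> by simp
  qed
  have ha: "\<And>r. r \<ge> 1 \<Longrightarrow> h (aS r) = 2"
  proof -
    fix r :: nat assume r: "r \<ge> 1"
    have "h (aS r) = g w (\<lambda>i\<in>{..<k}. h ((\<lambda>i\<in>{..<k}. if i = 0 then (P ^^ r) xF else if i = 1 then (P ^^ r) xF else xF) i))"
      unfolding aS_def V_def using hop PrF xFF by (auto simp: restrict_PiE_iff)
    then show "h (aS r) = 2" using k2 hPr[OF xFF r] unfolding g_def by simp
  qed
  have hb: "\<And>r. r \<ge> 1 \<Longrightarrow> h (bS r) = 1" unfolding bS_def using hPr aF by blast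
  define Z where "Z = prod_topology TF TF"
  have cptZ: "compact_space Z" unfolding Z_def using cptF compact_space_prod_topology by blast
  have topZ: "topspace Z = F \<times> F" unfolding Z_def using topF by simp
  define sq where "sq i = (aS (fact i), bS (fact i))" for i
  define C where "C i = Z closure_of (sq ` {i..})" for i
  have "(\<Inter>i. C i) \<noteq> {}"
  proof (rule compact_space_imp_nest[OF cptZ])
    show "\<And>i. closedin Z (C i)" unfolding C_def by simp
    show "\<And>i. C i \<noteq> {}"
    proof -
      fix i
      have "sq ` {i..} \<subseteq> topspace Z" unfolding topZ sq_def using aF bF by auto
      then have "sq ` {i..} \<subseteq> C i" unfolding C_def by (rule closure_of_subset)
      then show "C i \<noteq> {}" by auto
    qed
    show "decseq C" unfolding decseq_def C_def
      by (auto intro!: closure_of_mono image_mono)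
  qed
  then obtain p q where pq: "(p, q) \<in> (\<Inter>i. C i)" by auto
  have pqZ: "(p, q) \<in> topspace Z" using pq unfolding C_def using closure_of_subset_topspace by fast
  then have pF: "p \<in> F" and qF: "q \<in> F" using topZ by auto
  have clus: "\<And>D i0. closedin Z D \<Longrightarrow> (\<And>i. i \<ge> i0 \<Longrightarrow> sq i \<in> D) \<Longrightarrow> (p, q) \<in> D"
  proof -
    fix D i0 assume D: "closedin Z D" "\<And>i. i \<ge> i0 \<Longrightarrow> sq i \<in> D"
    have "C i0 \<subseteq> D" unfolding C_def using D by (intro closure_of_minimal) auto
    then show "(p, q) \<in> D" using pq by auto
  qed
  have hp: "h p = 2"
  proof -
    have "closedin Z {z \<in> topspace Z. (h \<circ> fst) z \<in> {2}}"
      unfolding Z_def by (rule closedin_continuous_map_preimage[OF continuous_map_compose[OF continuous_map_fst hcont]]) (auto simp: B_def)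
    moreover have "\<And>i. i \<ge> 0 \<Longrightarrow> sq i \<in> {z \<in> topspace Z. (h \<circ> fst) z \<in> {2}}"
      unfolding sq_def topZ using ha aF bF fact_ge_1 by auto
    ultimately have "(p, q) \<in> {z \<in> topspace Z. (h \<circ> fst) z \<in> {2}}" by (rule clus)
    then show ?thesis by simp
  qed
  have hq: "h q = 1"
  proof -
    have "closedin Z {z \<in> topspace Z. (h \<circ> snd) z \<in> {1}}"
      unfolding Z_def by (rule closedin_continuous_map_preimage[OF continuous_map_compose[OF continuous_map_snd hcont]]) (auto simp: B_def)
    moreover have "\<And>i. i \<ge> 0 \<Longrightarrow> sq i \<in> {z \<in> topspace Z. (h \<circ> snd) z \<in> {1}}"
      unfolding sq_def topZ using hb aF bF fact_ge_1 by auto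
    ultimately have "(p, q) \<in> {z \<in> topspace Z. (h \<circ> snd) z \<in> {1}}" by (rule clus)
    then show ?thesis by simp
  qed
  have pq_ne: "p \<noteq> q" using hp hq by auto
  have "\<Phi> p = \<Phi> q"
  proof (rule ccontr)
    assume ne: "\<Phi> p \<noteq> \<Phi> q"
    obtain N :: "nat set" and n d \<kappa> where fm: "finite_monoid N n d" and kh: "mon_hom M m e N n d \<kappa>"
      and kc: "continuous_map TM (discrete_topology N) \<kappa>" and kne: "\<kappa> (\<Phi> p) \<noteq> \<kappa> (\<Phi> q)"
      using sepM[OF \<Phi>M[OF pF] \<Phi>M[OF qF] ne] by blast
    have finN: "finite N" and monN: "monoid_on N n d" using fm unfolding finite_monoid_def by auto
    define \<psi> where "\<psi> z = \<kappa> (\<Phi> z)" for z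
    have \<psi>N: "\<And>z. z \<in> F \<Longrightarrow> \<psi> z \<in> N" unfolding \<psi>_def using \<Phi>M kh unfolding mon_hom_def by blast
    have \<psi>c: "continuous_map TF (discrete_topology N) \<psi>"
    proof -
      have "continuous_map (subtopology TM S) (discrete_topology N) \<kappa>"
        using kc by (rule continuous_map_from_subtopology)
      then have "continuous_map TF (discrete_topology N) (\<kappa> \<circ> \<Phi>)"
        using assms(5) S_def continuous_map_compose by blast
      then show ?thesis unfolding \<psi>_def o_def .
    qed
    define cc where "cc = \<kappa> (j (Inr w))"
    define xx where "xx = \<psi> xF"
    have ccN: "cc \<in> N" unfolding cc_def using rngM kh unfolding mon_hom_def by auto
    have xxN: "xx \<in> N" unfolding xx_def using \<psi>N xFF by blast
    have \<psi>op: "\<And>u. u \<in> PiE {..<k} (\<lambda>_. F) \<Longrightarrow> \<psi> (opF w u) = foldl n cc (map (\<lambda>i. \<psi> (u i)) [0..<k])"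
    proof -
      fix u assume u: "u \<in> PiE {..<k} (\<lambda>_. F)"
      have "\<psi> (opF w u) = \<kappa> (foldl m (j (Inr w)) (map (\<lambda>i. \<Phi> (u i)) [0..<k]))"
        unfolding \<psi>_def using \<Phi>op[OF u] by simp
      also have "\<dots> = foldl n cc (map \<kappa> (map (\<lambda>i. \<Phi> (u i)) [0..<k]))"
        unfolding cc_def using u rngM \<Phi>M by (intro hom_foldl[OF kh monM]) (auto simp: PiE_iff)
      finally show "\<psi> (opF w u) = foldl n cc (map (\<lambda>i. \<psi> (u i)) [0..<k])"
        by (simp add: \<psi>_def o_def)
    qed
    define Pn where "Pn t = n (n cc t) (mp n d xx (k - 1))" for t
    have \<psi>P: "\<And>y. y \<in> F \<Longrightarrow> \<psi> (P y) = Pn (\<psi> y)"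
    proof -
      fix y assume y: "y \<in> F"
      have "\<psi> (P y) = foldl n cc (map (\<lambda>i. \<psi> ((\<lambda>i\<in>{..<k}. if i = 0 then y else xF) i)) [0..<k])"
        unfolding P_def using \<psi>op y xFF by (auto simp: restrict_PiE_iff)
      also have "map (\<lambda>i. \<psi> ((\<lambda>i\<in>{..<k}. if i = 0 then y else xF) i)) [0..<k] = \<psi> y # replicate (k - 1) xx"
      proof -
        have "[0..<k] = 0 # [1..<k]" using k2 upt_conv_Cons by auto
        moreover have "map (\<lambda>i. \<psi> ((\<lambda>i\<in>{..<k}. if i = 0 then y else xF) i)) [1..<k] = replicate (k - 1) xx"
          by (rule nth_equalityI) (auto simp: xx_def)
        ultimately show ?thesis using k2 by simp
      qed
      also have "foldl n cc (\<psi> y # replicate (k - 1) xx) = n (n cc (\<psi> y)) (mp n d xx (k - 1))"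
      proof -
        have "n cc (\<psi> y) \<in> N" using monN ccN \<psi>N y by (simp add: monoid_on_def)
        moreover have "set (replicate (k - 1) xx) \<subseteq> N" using xxN by (cases "k - 1") auto
        ultimately have "foldl n (n cc (\<psi> y)) (replicate (k - 1) xx) = n (n cc (\<psi> y)) (foldl n d (replicate (k - 1) xx))"
          by (rule foldl_mon[OF monN])
        then show ?thesis unfolding foldl_rep[OF monN xxN] by simp
      qed
      finally show "\<psi> (P y) = Pn (\<psi> y)" unfolding Pn_def .
    qed
    have \<psi>V: "\<And>y z. y \<in> F \<Longrightarrow> z \<in> F \<Longrightarrow> \<psi> (V y z) = n (n (n cc (\<psi> y)) (\<psi> z)) (mp n d xx (k - 1 - 1))"
    proof -
      fix y z assume y: "y \<in> F" and z: "z \<in> F"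
      have "\<psi> (V y z) = foldl n cc (map (\<lambda>i. \<psi> ((\<lambda>i\<in>{..<k}. if i = 0 then y else if i = 1 then z else xF) i)) [0..<k])"
        unfolding V_def using \<psi>op y z xFF by (auto simp: restrict_PiE_iff)
      also have "map (\<lambda>i. \<psi> ((\<lambda>i\<in>{..<k}. if i = 0 then y else if i = 1 then z else xF) i)) [0..<k] = \<psi> y # \<psi> z # replicate (k - 1 - 1) xx"
      proof -
        have "[1..<k] = 1 # [2..<k]" using k2 upt_conv_Cons[of 1 k] by (simp add: numeral_2_eq_2)
        then have "[0..<k] = 0 # 1 # [2..<k]" using k2 upt_conv_Cons[of 0 k] by simp
        moreover have "map (\<lambda>i. \<psi> ((\<lambda>i\<in>{..<k}. if i = 0 then y else if i = 1 then z else xF) i)) [2..<k] = replicate (k - 1 - 1) xx"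
          by (rule nth_equalityI) (auto simp: xx_def)
        ultimately show ?thesis using k2 by simp
      qed
      also have "foldl n cc (\<psi> y # \<psi> z # replicate (k - 1 - 1) xx) = n (n (n cc (\<psi> y)) (\<psi> z)) (mp n d xx (k - 1 - 1))"
      proof -
        have "n (n cc (\<psi> y)) (\<psi> z) \<in> N" using monN ccN \<psi>N y z by (simp add: monoid_on_def)
        moreover have "set (replicate (k - 1 - 1) xx) \<subseteq> N" using xxN by (cases "k - 1 - 1") auto
        ultimately have "foldl n (n (n cc (\<psi> y)) (\<psi> z)) (replicate (k - 1 - 1) xx) = n (n (n cc (\<psi> y)) (\<psi> z)) (foldl n d (replicate (k - 1 - 1) xx))"
          by (rule foldl_mon[OF monN])
        then show ?thesis unfolding foldl_rep[OF monN xxN] by simp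
      qed
      finally show "\<psi> (V y z) = n (n (n cc (\<psi> y)) (\<psi> z)) (mp n d xx (k - 1 - 1))" .
    qed
    have \<psi>Pr: "\<And>r y. y \<in> F \<Longrightarrow> \<psi> ((P ^^ r) y) = (Pn ^^ r) (\<psi> y)"
    proof -
      fix r :: nat and y assume y: "y \<in> F"
      show "\<psi> ((P ^^ r) y) = (Pn ^^ r) (\<psi> y)"
        by (induction r) (auto simp: \<psi>P PrF y)
    qed
    have eqab: "\<And>i. i \<ge> card N \<Longrightarrow> \<psi> (aS (fact i)) = \<psi> (bS (fact i))"
    proof -
      fix i assume i: "i \<ge> card N"
      have ic: "mp n d cc (fact i + fact i) = mp n d cc (fact i)" using mp_idem[OF monN finN ccN i] .
      have ix: "mp n d xx (fact i + fact i) = mp n d xx (fact i)" using mp_idem[OF monN finN xxN i] .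
      have K: "k - 1 \<ge> 1" using k2 by simp
      have A: "\<psi> (aS (fact i)) = n (n (n cc ((Pn ^^ fact i) xx)) ((Pn ^^ fact i) xx)) (mp n d xx (k - 1 - 1))"
        unfolding aS_def using \<psi>V PrF xFF \<psi>Pr xx_def by simp
      have "\<psi> (bS (fact i)) = (Pn ^^ fact i) (\<psi> (aS (fact i)))"
        unfolding bS_def using \<psi>Pr aF by blast
      also have "\<dots> = \<psi> (aS (fact i))"
        unfolding A by (rule key[OF monN ccN xxN ic ix K Pn_def])
      finally show "\<psi> (aS (fact i)) = \<psi> (bS (fact i))" by simp
    qed
    have "closedin Z {z \<in> topspace Z. (\<lambda>z. (\<psi> (fst z), \<psi> (snd z))) z \<in> {(v, v) | v. v \<in> N}}"
    proof (rule closedin_continuous_map_preimage)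
      show "continuous_map Z (discrete_topology (N \<times> N)) (\<lambda>z. (\<psi> (fst z), \<psi> (snd z)))"
        unfolding prod_topology_discrete_topology Z_def
        by (intro continuous_map_pairedI continuous_map_compose[OF continuous_map_fst \<psi>c, unfolded o_def]
                  continuous_map_compose[OF continuous_map_snd \<psi>c, unfolded o_def])
      show "closedin (discrete_topology (N \<times> N)) {(v, v) | v. v \<in> N}" by auto
    qed
    moreover have "\<And>i. i \<ge> card N \<Longrightarrow> sq i \<in> {z \<in> topspace Z. (\<lambda>z. (\<psi> (fst z), \<psi> (snd z))) z \<in> {(v, v) | v. v \<in> N}}"
      unfolding sq_def topZ using eqab aF bF \<psi>N by auto
    ultimately have "(p, q) \<in> {z \<in> topspace Z. (\<lambda>z. (\<psi> (fst z), \<psi> (snd z))) z \<in> {(v, v) | v. v \<in> N}}"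
      using clus by blast
    then have "\<psi> p = \<psi> q" by auto
    then show False using kne unfolding \<psi>_def by simp
  qed
  then show ?thesis using pF qF pq_ne unfolding inj_on_def by blast
qed

end
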